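(* For compiler constructions that are context-free (i.e., may be embedded in a context that reads all locations, so that offset synchronization at every control path join is necessary) and that conform to the principle that every machine code instruction that writes introduces maximal entropy, the entropy of the runtime trace is maximal among all ways of (randomly) varying the embedded constants in the machine code that preserve correctness of the compiled program.
   Context: Setting (encrypted computing with chaotic compilation). A processor computes on encrypted 32-bit words. The compiler is stochastic: recompiling the same source produces machine code and runtime traces of identical structure, differing only in encrypted constants embedded in instructions. At each program point the compiler maintains an obfuscation scheme assigning to every register and memory location $l$ an offset $\Delta l\in\mathbb{Z}/2^{32}$, the plaintext stored in $l$ at runtime being the nominal (programmer-intended) value plus $\Delta l$ mod $2^{32}$; each arithmetic instruction's embedded constant can set the offset of its target location to any value. The trace is the runtime sequence of writes to locations (viewed at the level of plaintexts beneath the encryption), a random variable over recompilations, with entropy $\mathbb{E}[-\log_2 f_T]$ where $f_T$ is its distribution. Correctness forces: copy instructions preserve data exactly, and where control paths join (loop ends, after conditionals, subroutine returns, goto targets) each location's offset must coincide on all joining paths. The principle "every instruction that writes introduces maximal entropy" means each arithmetic instruction that writes chooses the new offset of its target uniformly at random and independently of all other choices, subject only to these correctness constraints (the last writes to a location before a join on each path, called trailer instructions, share one common random offset), and input offsets (for locations read before being written) are uniform and independent. *)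

theory Defs
  imports "HOL-Probability.Probability" "HOL-Library.Word"
begin

text \<open>Abstract model of one compiled program and one fixed run (fixed inputs).
  'v : the offset variables = the arithmetic (writing) instructions with embedded
       constants, plus the input locations (read before written);
  sync : the synchronization relation: sync x y means correctness at some control
       path join forces the offsets chosen by x and y to coincide (trailer instructions
       for the same location at the same join, input offsets at loop heads, ...);
       context-freeness means every such synchronization is necessary, so the set of
       correct offset assignments is exactly those respecting sync;
  the run: n writes; write i goes to location loc i, has nominal value nom i, and the
       offset of its target after the write is the offset variable src i (for an
       arithmetic write, the instruction itself; for a copy, the variable that
       determined the offset of its source, since copies preserve data exactly).\<close>

type_synonym word32 = "32 word"

type_synonym 'v offsets = "'v \<Rightarrow> word32"

definition correct_offsets :: "('v \<Rightarrow> 'v \<Rightarrow> bool) \<Rightarrow> 'v offsets set" where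
  "correct_offsets sync = {\<delta>. \<forall>x y. sync x y \<longrightarrow> \<delta> x = \<delta> y}"

text \<open>The runtime trace (plaintexts beneath the encryption): the sequence of writes,
  each being the target location and the written plaintext = nominal value + offset.\<close>
definition run_trace ::
  "nat \<Rightarrow> (nat \<Rightarrow> 'l) \<Rightarrow> (nat \<Rightarrow> word32) \<Rightarrow> (nat \<Rightarrow> 'v) \<Rightarrow> 'v offsets \<Rightarrow> ('l \<times> word32) list" where
  "run_trace n loc nom src \<delta> = map (\<lambda>i. (loc i, nom i + \<delta> (src i))) [0..<n]"

text \<open>Maximal entropy principle: every equivalence class of synchronized offset
  variables (a single arithmetic write, a group of trailer instructions sharing one
  offset, an input) receives its own offset, uniformly at random and independently of
  all other choices.  Here sync is an equivalence relation; the class of v is sync v.\<close>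
definition max_entropy_compilation :: "('v::finite \<Rightarrow> 'v \<Rightarrow> bool) \<Rightarrow> 'v offsets pmf" where
  "max_entropy_compilation sync =
     map_pmf (\<lambda>g v. g (Collect (sync v))) (pmf_of_set (UNIV :: ('v set \<Rightarrow> word32) set))"

definition entropy_pmf :: "'a pmf \<Rightarrow> real" where
  "entropy_pmf p = measure_pmf.expectation p (\<lambda>x. - log 2 (pmf p x))"

end

theory Submission
  imports Defs
begin

lemma entropy_le_log_card:
  fixes p :: "'a pmf"
  assumes S: "finite S" "set_pmf p \<subseteq> S"
  shows "entropy_pmf p \<le> log 2 (card S)"
proof -
  have ne: "S \<noteq> {}" using S set_pmf_not_empty[of p] by blast
  have cpos: "card S > 0" using S ne by (simp add: card_gt_0_iff)
  define c where "c = real (card S)"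
  have c0: "c > 0" using cpos c_def by simp
  have E: "entropy_pmf p = (\<Sum>x\<in>S. - log 2 (pmf p x) * pmf p x)"
    unfolding entropy_pmf_def
    by (rule integral_measure_pmf_real) (use S in auto)
  have trm: "- log 2 (pmf p x) * pmf p x \<le> pmf p x * log 2 c + (1 / c - pmf p x) / ln 2" for x
  proof (cases "pmf p x = 0")
    case True then show ?thesis using c0 by simp
  next
    case False
    then have px: "pmf p x > 0" using pmf_nonneg[of p x] by linarith
    have "- log 2 (pmf p x) - log 2 c = ln (1 / (pmf p x * c)) / ln 2"
      using px c0 by (simp add: log_def ln_mult ln_div field_simps)
    also have "\<dots> \<le> (1 / (pmf p x * c) - 1) / ln 2"
      by (rule divide_right_mono) (use px c0 ln_le_minus_one[of "1 / (pmf p x * c)"] in auto)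
    finally have "- log 2 (pmf p x) \<le> log 2 c + (1 / (pmf p x * c) - 1) / ln 2" by simp
    from mult_left_mono[OF this, of "pmf p x"] px
    have "pmf p x * (- log 2 (pmf p x)) \<le> pmf p x * (log 2 c + (1 / (pmf p x * c) - 1) / ln 2)"
      by simp
    also have "\<dots> = pmf p x * log 2 c + (1 / c - pmf p x) / ln 2"
      using px c0 by (simp add: field_simps)
    finally show ?thesis by (simp add: mult.commute)
  qed
  have "entropy_pmf p \<le> (\<Sum>x\<in>S. pmf p x * log 2 c + (1 / c - pmf p x) / ln 2)"
    unfolding E by (rule sum_mono) (rule trm)
  also have "\<dots> = (\<Sum>x\<in>S. pmf p x) * log 2 c + (card S * (1/c) - (\<Sum>x\<in>S. pmf p x)) / ln 2"
    by (simp add: sum.distrib sum_distrib_right sum_subtractf sum_divide_distrib[symmetric])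
  also have "\<dots> = log 2 c"
    using sum_pmf_eq_1[OF S] c0 c_def by simp
  finally show ?thesis by (simp add: c_def)
qed

lemma entropy_uniform:
  assumes "finite S" "S \<noteq> {}"
  shows "entropy_pmf (pmf_of_set S) = log 2 (card S)"
proof -
  have cpos: "card S > 0" using assms by (simp add: card_gt_0_iff)
  have "entropy_pmf (pmf_of_set S) = (\<Sum>x\<in>S. - log 2 (pmf (pmf_of_set S) x) * pmf (pmf_of_set S) x)"
    unfolding entropy_pmf_def
    by (rule integral_measure_pmf_real) (use assms in auto)
  also have "\<dots> = (\<Sum>x\<in>S. log 2 (card S) / card S)"
    using assms cpos by (intro sum.cong) (auto simp: log_divide)
  also have "\<dots> = log 2 (card S)" using cpos by simp
  finally show ?thesis .
qed

lemma map_pmf_uniform: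
  fixes h :: "'a::finite \<Rightarrow> 'b"
  assumes B: "\<And>x y. \<exists>\<phi>. bij \<phi> \<and> (\<forall>z. h (\<phi> z) = h y \<longleftrightarrow> h z = h x)"
  shows "map_pmf h (pmf_of_set UNIV) = pmf_of_set (range h)"
proof -
  define N where "N = real (card (UNIV :: 'a set))"
  have fib: "card (h -` {h x}) = card (h -` {h y})" for x y
  proof -
    obtain \<phi> where \<phi>: "bij \<phi>" "\<And>z. h (\<phi> z) = h y \<longleftrightarrow> h z = h x" using B by blast
    have "\<phi> ` (h -` {h x}) = h -` {h y}"
    proof
      show "\<phi> ` (h -` {h x}) \<subseteq> h -` {h y}" using \<phi> by auto
      show "h -` {h y} \<subseteq> \<phi> ` (h -` {h x})"
      proof
        fix w assume w: "w \<in> h -` {h y}"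
        obtain z where z: "w = \<phi> z" using \<phi>(1) by (metis bij_pointE)
        then show "w \<in> \<phi> ` (h -` {h x})" using w \<phi>(2)[of z] by auto
      qed
    qed
    moreover have "inj_on \<phi> (h -` {h x})" by (meson \<phi>(1) bij_is_inj inj_on_subset subset_UNIV)
    ultimately show ?thesis using card_image by metis
  qed
  define p where "p = map_pmf h (pmf_of_set UNIV)"
  fix x0 :: 'a
  define a where "a = real (card (h -` {h x0})) / N"
  have pm: "pmf p t = real (card (h -` {t})) / N" for t
    unfolding p_def N_def by (simp add: pmf_map measure_pmf_of_set)
  have pa: "pmf p (h x) = a" for x using pm fib a_def by simp
  have sp: "set_pmf p = range h" unfolding p_def by simp
  have "(\<Sum>t\<in>range h. pmf p t) = 1" using sum_pmf_eq_1[of "range h" p] sp by simp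
  then have "(\<Sum>t\<in>range h. a) = 1"
    by (metis (no_types, lifting) imageE pa sum.cong)
  then have a1: "a = 1 / card (range h)" by (simp add: field_simps)
  show ?thesis unfolding p_def[symmetric]
  proof (rule pmf_eqI)
    fix t
    show "pmf p t = pmf (pmf_of_set (range h)) t"
    proof (cases "t \<in> range h")
      case True then show ?thesis using pa a1 by auto
    next
      case False
      then have "pmf p t = 0" using sp by (metis set_pmf_iff)
      then show ?thesis using False by simp
    qed
  qed
qed

lemma run_trace_eq:
  "run_trace n loc nom src a = run_trace n loc nom src b \<longleftrightarrow> (\<forall>i<n. a (src i) = b (src i))"
  unfolding run_trace_def by (auto simp: map_eq_conv)

theorem proposition1:
  fixes sync :: "'v::finite \<Rightarrow> 'v \<Rightarrow> bool"
    and n :: nat and loc :: "nat \<Rightarrow> 'l" and nom :: "nat \<Rightarrow> word32" and src :: "nat \<Rightarrow> 'v"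
    and q :: "'v offsets pmf"
  assumes "equivp sync"
    and "set_pmf q \<subseteq> correct_offsets sync"
  shows "entropy_pmf (map_pmf (run_trace n loc nom src) q)
         \<le> entropy_pmf (map_pmf (run_trace n loc nom src) (max_entropy_compilation sync))"
proof -
  define F where "F = run_trace n loc nom src"
  define E where "E = (\<lambda>(g :: 'v set \<Rightarrow> word32) v. g (Collect (sync v)))"
  have FE: "F (E a) = F (E b) \<longleftrightarrow> (\<forall>i<n. a (Collect (sync (src i))) = b (Collect (sync (src i))))" for a b
    unfolding F_def E_def run_trace_eq by simp
  have unif: "map_pmf (F \<circ> E) (pmf_of_set UNIV) = pmf_of_set (range (F \<circ> E))"
  proof (rule map_pmf_uniform)
    fix x y :: "'v set \<Rightarrow> word32"
    define \<phi> where "\<phi> = (\<lambda>g A. g A + (y A - x A))"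
    have "bij \<phi>"
      by (rule bij_betw_byWitness[where f' = "\<lambda>g A. g A - (y A - x A)"]) (auto simp: \<phi>_def)
    moreover have "\<forall>z. (F \<circ> E) (\<phi> z) = (F \<circ> E) y \<longleftrightarrow> (F \<circ> E) z = (F \<circ> E) x"
      by (simp add: FE \<phi>_def)
    ultimately show "\<exists>\<phi>. bij \<phi> \<and> (\<forall>z. (F \<circ> E) (\<phi> z) = (F \<circ> E) y \<longleftrightarrow> (F \<circ> E) z = (F \<circ> E) x)"
      by blast
  qed
  have rhs: "map_pmf F (max_entropy_compilation sync) = pmf_of_set (range (F \<circ> E))"
    unfolding max_entropy_compilation_def E_def[symmetric] using unif by (simp add: map_pmf_comp comp_def)
  have refl: "sync v v" for v using assms(1) by (meson equivp_reflp)
  have corr: "correct_offsets sync \<subseteq> range E"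
  proof
    fix \<delta> assume d: "\<delta> \<in> correct_offsets sync"
    have "E (\<lambda>A. \<delta> (SOME w. w \<in> A)) = \<delta>"
    proof
      fix v
      have "(SOME w. w \<in> Collect (sync v)) \<in> Collect (sync v)"
        by (rule someI[of _ v]) (simp add: refl)
      then show "E (\<lambda>A. \<delta> (SOME w. w \<in> A)) v = \<delta> v"
        using d unfolding E_def correct_offsets_def by auto
    qed
    then show "\<delta> \<in> range E" by (metis rangeI)
  qed
  have sub: "set_pmf (map_pmf F q) \<subseteq> range (F \<circ> E)"
    using assms(2) corr by auto
  have "entropy_pmf (map_pmf F q) \<le> log 2 (card (range (F \<circ> E)))"
    by (rule entropy_le_log_card[OF _ sub]) simp
  also have "\<dots> = entropy_pmf (map_pmf F (max_entropy_compilation sync))"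
    unfolding rhs by (rule entropy_uniform[symmetric]) auto
  finally show ?thesis unfolding F_def .
qed

end
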